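(* If the speeds satisfy $\liminf_{n\to\infty}\left(\prod_{i=2}^n s_i\right)^{1/n}=1$, then $\mathcal{S}$-DC is not competitive for the infinite server problem on the half-line $[0,\infty)$ with source $0$.
   Context: Infinite server problem on the half-line $[0,\infty)$ with source $0$: an unbounded number of servers initially reside at $0$; requests are revealed one by one and must be served immediately, without knowledge of future requests, by moving a server to the request; the cost is the total distance traveled. Let $\mathcal{S}=\{s_i\ge1 : i\ge2\}$ be given by a monotonic (non-decreasing or non-increasing) sequence of speeds $s_i\ge1$. Denote by $x_i$ the $i$-th server from the right. Algorithm $\mathcal{S}$-DC: if a request lies between servers $x_{i+1}$ (to its left) and $x_i$ (to its right), move them towards it with speeds $s_{i+1}$ and $1$ respectively until one of them reaches it; if no server is to the right of the request, move the rightmost server to the request. An online algorithm is competitive if there are $\rho,c$ with $ALG(\sigma)\le\rho\,OPT(\sigma)+c$ for all request sequences $\sigma$. *)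

theory Defs
  imports "HOL-Analysis.Analysis"
begin

text \<open>Configurations of the infinite server problem on the half-line [0,oo) with source 0.
  A configuration is given by x :: nat => real, where x i (for i >= 1) is the position of the
  i-th server from the right; x is non-increasing on i >= 1 and x i = 0 for all but finitely
  many i (the unboundedly many servers still at the source 0). The value x 0 is unused.\<close>

text \<open>Speeds s i are used for i >= 2. Let i be least with x (i+1) < r.
  If i = 0 (no server at or to the right of r) the rightmost server moves to r.
  Otherwise x (i+1) < r <= x i; the two servers move towards r with speeds s (i+1) and 1
  until one of them reaches r (time t). If no such i exists (r = 0) a server is already at r.\<close>
definition dc_step :: "(nat \<Rightarrow> real) \<Rightarrow> (nat \<Rightarrow> real) \<Rightarrow> real \<Rightarrow> (nat \<Rightarrow> real) \<times> real" where
  "dc_step s x r =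
    (if \<not> (\<exists>i. x (Suc i) < r) then (x, 0)
     else (let i = (LEAST i. x (Suc i) < r) in
       if i = 0 then (x(1 := r), r - x 1)
       else (let t = min (x i - r) ((r - x (Suc i)) / s (Suc i)) in
         (x(i := x i - t, Suc i := x (Suc i) + s (Suc i) * t), (1 + s (Suc i)) * t))))"

fun dc_cost_from :: "(nat \<Rightarrow> real) \<Rightarrow> (nat \<Rightarrow> real) \<Rightarrow> real list \<Rightarrow> real" where
  "dc_cost_from s x [] = 0"
| "dc_cost_from s x (r # rs) = (case dc_step s x r of (x', c) \<Rightarrow> c + dc_cost_from s x' rs)"

definition DC_cost :: "(nat \<Rightarrow> real) \<Rightarrow> real list \<Rightarrow> real" where
  "DC_cost s \<sigma> = dc_cost_from s (\<lambda>_. 0) \<sigma>"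

text \<open>Offline solutions: servers labelled by naturals, p t k = position of server k after
  serving the first t requests; only servers k < N ever leave the source; all positions lie
  in the half-line; after step t+1 some server is at request t.\<close>
definition feasible_schedule :: "real list \<Rightarrow> nat \<Rightarrow> (nat \<Rightarrow> nat \<Rightarrow> real) \<Rightarrow> bool" where
  "feasible_schedule \<sigma> N p \<longleftrightarrow>
     (\<forall>k. p 0 k = 0) \<and> (\<forall>t k. 0 \<le> p t k) \<and> (\<forall>t k. N \<le> k \<longrightarrow> p t k = 0) \<and>
     (\<forall>t < length \<sigma>. \<exists>k. p (Suc t) k = \<sigma> ! t)"

definition schedule_cost :: "real list \<Rightarrow> nat \<Rightarrow> (nat \<Rightarrow> nat \<Rightarrow> real) \<Rightarrow> real" where
  "schedule_cost \<sigma> N p = (\<Sum>t<length \<sigma>. \<Sum>k<N. \<bar>p (Suc t) k - p t k\<bar>)"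

definition OPT :: "real list \<Rightarrow> real" where
  "OPT \<sigma> = Inf {schedule_cost \<sigma> N p | N p. feasible_schedule \<sigma> N p}"

definition competitive :: "(real list \<Rightarrow> real) \<Rightarrow> bool" where
  "competitive ALG \<longleftrightarrow>
     (\<exists>\<rho> c. \<forall>\<sigma>. (\<forall>r\<in>set \<sigma>. 0 \<le> r) \<longrightarrow> ALG \<sigma> \<le> \<rho> * OPT \<sigma> + c)"

end

theory Submission
  imports Defs
begin

fun vv :: "(nat \<Rightarrow> real) \<Rightarrow> nat \<Rightarrow> real" where
  "vv s 0 = 0"
| "vv s (Suc j) = (if j = 0 then 0 else (vv s j + 1) / s (Suc j))"

definition GG :: "nat \<Rightarrow> (nat \<Rightarrow> real) \<Rightarrow> (nat \<Rightarrow> real) \<Rightarrow> real" where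
  "GG N v x = (\<Sum>j<N. v j * x j)"

lemma GG_upd: "a < N \<Longrightarrow> GG N v (x(a := y)) = GG N v x + v a * (y - x a)"
proof -
  assume a: "a < N"
  have "GG N v (x(a := y)) = (\<Sum>j<N. v j * x j + (if j = a then v a * (y - x a) else 0))"
    unfolding GG_def by (rule sum.cong) (auto simp: algebra_simps)
  also have "\<dots> = GG N v x + v a * (y - x a)"
    using a by (simp add: sum.distrib GG_def)
  finally show ?thesis .
qed

lemma vv_nonneg: "\<forall>i\<ge>2. 1 \<le> s i \<Longrightarrow> 0 \<le> vv s j"
proof (induction j)
  case (Suc j)
  show ?case
  proof (cases j)
    case (Suc k)
    have "1 \<le> s (Suc j)" using Suc.prems Suc by auto
    moreover have "0 \<le> vv s j" using Suc.IH Suc.prems by blast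
    moreover have "vv s (Suc j) = (vv s j + 1) / s (Suc j)" using Suc by simp
    ultimately show ?thesis by simp
  qed simp
qed simp

lemma vv_rec: "\<forall>i\<ge>2. 1 \<le> s i \<Longrightarrow> 1 \<le> i \<Longrightarrow> vv s (Suc i) * s (Suc i) = vv s i + 1"
proof -
  assume s1: "\<forall>i\<ge>2. 1 \<le> s i" and i: "1 \<le> i"
  have "s (Suc i) \<ge> 1" using s1 i by auto
  then show ?thesis using i by (cases i) auto
qed

lemma step_props:
  assumes s1: "\<forall>i\<ge>2. 1 \<le> s i" and r: "0 < r" and nn: "\<forall>j. 0 \<le> x j"
    and sup: "\<forall>j\<ge>Suc K. x j = 0"
  shows "0 \<le> snd (dc_step s x r) \<and> (\<forall>j. 0 \<le> fst (dc_step s x r) j)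
    \<and> (\<forall>j\<ge>Suc (Suc K). fst (dc_step s x r) j = 0) \<and> (\<exists>j. fst (dc_step s x r) j = r)
    \<and> (\<forall>j. \<bar>fst (dc_step s x r) j - x j\<bar> \<le> snd (dc_step s x r))
    \<and> (Suc (Suc K) \<le> N \<longrightarrow> GG N (vv s) (fst (dc_step s x r)) \<le> GG N (vv s) x + snd (dc_step s x r) / 2)"
proof -
  have ex: "\<exists>i. x (Suc i) < r" using sup r by (intro exI[of _ K]) auto
  define i where "i = (LEAST i. x (Suc i) < r)"
  have idef: "(LEAST i. x (Suc i) < r) = i" using i_def by simp
  have xi1: "x (Suc i) < r" unfolding i_def using ex by (rule LeastI_ex)
  have iK: "i \<le> K" unfolding i_def using sup r by (intro Least_le) auto
  show ?thesis
  proof (cases "i = 0")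
    case True
    have D: "dc_step s x r = (x(1 := r), r - x 1)"
      unfolding dc_step_def using ex True idef by (simp add: Let_def)
    have G: "Suc (Suc K) \<le> N \<Longrightarrow> GG N (vv s) (x(1 := r)) = GG N (vv s) x"
      by (subst GG_upd) auto
    show ?thesis using True xi1 nn sup r G unfolding D by auto
  next
    case False
    have xi: "r \<le> x i"
    proof -
      have "i - 1 < i" using False by simp
      then have "\<not> x (Suc (i - 1)) < r" unfolding i_def by (rule not_less_Least)
      then show ?thesis using False by simp
    qed
    define sp where "sp = s (Suc i)"
    have sp1: "1 \<le> sp" using s1 False unfolding sp_def by auto
    define t where "t = min (x i - r) ((r - x (Suc i)) / sp)"
    have t0: "0 \<le> t" unfolding t_def using xi xi1 sp1 by auto
    have D: "dc_step s x r = (x(i := x i - t, Suc i := x (Suc i) + sp * t), (1 + sp) * t)"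
      unfolding dc_step_def using ex False idef by (simp add: Let_def t_def sp_def)
    have tle: "t \<le> x i - r" unfolding t_def by simp
    have c0: "0 \<le> (1 + sp) * t" using t0 sp1 by simp
    have exj: "\<exists>j. (x(i := x i - t, Suc i := x (Suc i) + sp * t)) j = r"
    proof (cases "x i - r \<le> (r - x (Suc i)) / sp")
      case True
      then have "t = x i - r" unfolding t_def by simp
      then show ?thesis by (intro exI[of _ i]) simp
    next
      case False
      then have "t = (r - x (Suc i)) / sp" unfolding t_def by simp
      then show ?thesis using sp1 by (intro exI[of _ "Suc i"]) simp
    qed
    have mv: "\<forall>j. \<bar>(x(i := x i - t, Suc i := x (Suc i) + sp * t)) j - x j\<bar> \<le> (1 + sp) * t"
      using t0 sp1 by (auto simp: algebra_simps)
    have G: "Suc (Suc K) \<le> N \<Longrightarrow> GG N (vv s) (x(i := x i - t, Suc i := x (Suc i) + sp * t))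
              \<le> GG N (vv s) x + (1 + sp) * t / 2"
    proof -
      assume N: "Suc (Suc K) \<le> N"
      have "GG N (vv s) (x(i := x i - t, Suc i := x (Suc i) + sp * t))
          = GG N (vv s) x + vv s i * (- t) + vv s (Suc i) * (sp * t)"
        using N iK by (simp add: GG_upd)
      also have "vv s (Suc i) * (sp * t) = (vv s i + 1) * t"
      proof -
        have R: "vv s (Suc i) * sp = vv s i + 1" using vv_rec[OF s1, of i] False unfolding sp_def by simp
        show ?thesis by (metis R mult.assoc)
      qed
      finally have e1: "GG N (vv s) (x(i := x i - t, Suc i := x (Suc i) + sp * t)) = GG N (vv s) x + vv s i * (- t) + (vv s i + 1) * t" .
      have "vv s i * (- t) + (vv s i + 1) * t = t" by (simp add: algebra_simps)
      with e1 have "GG N (vv s) (x(i := x i - t, Suc i := x (Suc i) + sp * t)) = GG N (vv s) x + t"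
        by linarith
      moreover have "t \<le> (1 + sp) * t / 2"
      proof -
        have "t * 1 \<le> t * sp" using t0 sp1 by (intro mult_left_mono)
        then show ?thesis by (simp add: algebra_simps)
      qed
      ultimately show ?thesis by linarith
    qed
    show ?thesis unfolding D using c0 exj mv G nn t0 tle xi r sp1 sup iK
      by (auto simp: mult_nonneg_nonneg)
  qed
qed


fun run :: "(nat \<Rightarrow> real) \<Rightarrow> (nat \<Rightarrow> real) \<Rightarrow> real list \<Rightarrow> (nat \<Rightarrow> real)" where
  "run s x [] = x"
| "run s x (r # rs) = run s (fst (dc_step s x r)) rs"

lemma dc_cost_Cons: "dc_cost_from s x (r # rs) = snd (dc_step s x r) + dc_cost_from s (fst (dc_step s x r)) rs"
  by (cases "dc_step s x r") auto

lemma run_append: "run s x (a @ b) = run s (run s x a) b"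
  by (induction a arbitrary: x) auto

lemma cost_append: "dc_cost_from s x (a @ b) = dc_cost_from s x a + dc_cost_from s (run s x a) b"
  by (induction a arbitrary: x) (simp_all add: dc_cost_Cons del: dc_cost_from.simps(2))

lemma run_props:
  assumes s1: "\<forall>i\<ge>2. 1 \<le> s i"
  shows "(\<forall>r\<in>set rs. 0 < r) \<Longrightarrow> (\<forall>j. 0 \<le> x j) \<Longrightarrow> (\<forall>j\<ge>Suc K. x j = 0) \<Longrightarrow>
    0 \<le> dc_cost_from s x rs \<and> (\<forall>j. 0 \<le> run s x rs j)
    \<and> (\<forall>j\<ge>Suc K + length rs. run s x rs j = 0)
    \<and> (\<forall>j. \<bar>run s x rs j - x j\<bar> \<le> dc_cost_from s x rs)
    \<and> (\<forall>r\<in>set rs. \<exists>j. \<bar>run s x rs j - r\<bar> \<le> dc_cost_from s x rs)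
    \<and> (Suc K + length rs \<le> N \<longrightarrow> GG N (vv s) (run s x rs) \<le> GG N (vv s) x + dc_cost_from s x rs / 2)"
proof (induction rs arbitrary: x K)
  case Nil
  then show ?case by simp
next
  case (Cons r rs)
  have r: "0 < r" using Cons.prems by simp
  note S = step_props[OF s1 r Cons.prems(2) Cons.prems(3), of N]
  define x' where "x' = fst (dc_step s x r)"
  define c where "c = snd (dc_step s x r)"
  have c0: "0 \<le> c" and nn': "\<forall>j. 0 \<le> x' j" and sup': "\<forall>j\<ge>Suc (Suc K). x' j = 0"
    and exr: "\<exists>j. x' j = r" and mv: "\<forall>j. \<bar>x' j - x j\<bar> \<le> c"
    and G: "Suc (Suc K) \<le> N \<longrightarrow> GG N (vv s) x' \<le> GG N (vv s) x + c / 2"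
    using S unfolding x'_def c_def by auto
  note IH = Cons.IH[of x' "Suc K", OF _ nn' sup']
  have IH': "0 \<le> dc_cost_from s x' rs \<and> (\<forall>j. 0 \<le> run s x' rs j)
    \<and> (\<forall>j\<ge>Suc (Suc K) + length rs. run s x' rs j = 0)
    \<and> (\<forall>j. \<bar>run s x' rs j - x' j\<bar> \<le> dc_cost_from s x' rs)
    \<and> (\<forall>r\<in>set rs. \<exists>j. \<bar>run s x' rs j - r\<bar> \<le> dc_cost_from s x' rs)
    \<and> (Suc (Suc K) + length rs \<le> N \<longrightarrow> GG N (vv s) (run s x' rs) \<le> GG N (vv s) x' + dc_cost_from s x' rs / 2)"
    using IH Cons.prems(1) by simp
  have runeq: "run s x (r # rs) = run s x' rs" unfolding x'_def by simp
  have costeq: "dc_cost_from s x (r # rs) = c + dc_cost_from s x' rs"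
    unfolding x'_def c_def by (rule dc_cost_Cons)
  have p1: "\<forall>j. \<bar>run s x' rs j - x j\<bar> \<le> c + dc_cost_from s x' rs"
  proof
    fix j
    have "\<bar>run s x' rs j - x' j\<bar> \<le> dc_cost_from s x' rs" using IH' by blast
    moreover have "\<bar>x' j - x j\<bar> \<le> c" using mv by blast
    ultimately show "\<bar>run s x' rs j - x j\<bar> \<le> c + dc_cost_from s x' rs" by linarith
  qed
  have p2: "\<forall>r'\<in>set (r # rs). \<exists>j. \<bar>run s x' rs j - r'\<bar> \<le> c + dc_cost_from s x' rs"
  proof
    fix r' assume "r' \<in> set (r # rs)"
    then consider "r' = r" | "r' \<in> set rs" by auto
    then show "\<exists>j. \<bar>run s x' rs j - r'\<bar> \<le> c + dc_cost_from s x' rs"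
    proof cases
      case 1
      obtain j where "x' j = r" using exr by blast
      moreover have "\<bar>run s x' rs j - x' j\<bar> \<le> dc_cost_from s x' rs" using IH' by blast
      ultimately show ?thesis using 1 c0 by (intro exI[of _ j]) auto
    next
      case 2
      then obtain j where "\<bar>run s x' rs j - r'\<bar> \<le> dc_cost_from s x' rs" using IH' by blast
      then show ?thesis using c0 by (intro exI[of _ j]) auto
    qed
  qed
  have p3: "Suc K + length (r # rs) \<le> N \<longrightarrow> GG N (vv s) (run s x' rs) \<le> GG N (vv s) x + (c + dc_cost_from s x' rs) / 2"
  proof
    assume N: "Suc K + length (r # rs) \<le> N"
    then have "GG N (vv s) (run s x' rs) \<le> GG N (vv s) x' + dc_cost_from s x' rs / 2"
      and "GG N (vv s) x' \<le> GG N (vv s) x + c / 2" using G IH' by auto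
    then show "GG N (vv s) (run s x' rs) \<le> GG N (vv s) x + (c + dc_cost_from s x' rs) / 2"
      by (simp add: add_divide_distrib)
  qed
  show ?case unfolding runeq costeq using p1 p2 p3 IH' c0 by auto
qed


lemma OPT_bound:
  assumes P0: "\<forall>r\<in>set P. 0 \<le> r" and sub: "set \<sigma> \<subseteq> set P"
  shows "0 \<le> OPT \<sigma> \<and> OPT \<sigma> \<le> sum_list P"
proof -
  define S where "S = {schedule_cost \<sigma> N p | N p. feasible_schedule \<sigma> N p}"
  define n where "n = length P"
  define p :: "nat \<Rightarrow> nat \<Rightarrow> real" where "p = (\<lambda>t k. if t = 0 \<or> n \<le> k then 0 else P ! k)"
  have feas: "feasible_schedule \<sigma> n p"
    unfolding feasible_schedule_def
  proof (intro conjI allI impI)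
    fix t k show "0 \<le> p t k" unfolding p_def n_def using P0 by (auto simp: nth_mem)
  next
    fix t assume "t < length \<sigma>"
    then have "\<sigma> ! t \<in> set P" using sub nth_mem by blast
    then obtain k where "k < n" "P ! k = \<sigma> ! t" unfolding n_def by (auto simp: in_set_conv_nth)
    then show "\<exists>k. p (Suc t) k = \<sigma> ! t" unfolding p_def by (intro exI[of _ k]) auto
  qed (auto simp: p_def)
  have cost: "schedule_cost \<sigma> n p \<le> sum_list P"
  proof (cases "length \<sigma>")
    case 0
    then show ?thesis unfolding schedule_cost_def using P0 by (simp add: sum_list_nonneg)
  next
    case (Suc L)
    have "schedule_cost \<sigma> n p = (\<Sum>k<n. \<bar>p (Suc 0) k - p 0 k\<bar>) + (\<Sum>t<L. \<Sum>k<n. \<bar>p (Suc (Suc t)) k - p (Suc t) k\<bar>)"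
      unfolding schedule_cost_def Suc by (rule sum.lessThan_Suc_shift)
    also have "(\<Sum>t<L. \<Sum>k<n. \<bar>p (Suc (Suc t)) k - p (Suc t) k\<bar>) = 0" unfolding p_def by simp
    also have "(\<Sum>k<n. \<bar>p (Suc 0) k - p 0 k\<bar>) = (\<Sum>k<n. P ! k)"
      unfolding p_def using P0 by (intro sum.cong) (auto simp: n_def nth_mem)
    also have "\<dots> = sum_list P" by (simp add: sum_list_sum_nth n_def atLeast0LessThan)
    finally show ?thesis by simp
  qed
  have mem: "schedule_cost \<sigma> n p \<in> S" unfolding S_def using feas by blast
  have bdd: "bdd_below S" unfolding S_def schedule_cost_def
    by (rule bdd_belowI[of _ 0]) (auto intro!: sum_nonneg)
  have lo: "\<forall>y\<in>S. 0 \<le> y" unfolding S_def schedule_cost_def by (auto intro!: sum_nonneg)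
  have "OPT \<sigma> = Inf S" unfolding OPT_def S_def by simp
  moreover have "Inf S \<le> schedule_cost \<sigma> n p" using mem bdd by (rule cInf_lower)
  moreover have "0 \<le> Inf S" using mem lo by (intro cInf_greatest) auto
  ultimately show ?thesis using cost by linarith
qed

lemma vv_big:
  assumes s1: "\<forall>i\<ge>2. 1 \<le> s i" and to1: "\<forall>\<eta>>0. \<exists>m. \<forall>i\<ge>m. s i \<le> 1 + \<eta>" and B: "0 < B"
  shows "\<exists>m. \<forall>j\<ge>m. B \<le> vv s j"
proof -
  define \<eta> where "\<eta> = 1 / (2 * B + 2)"
  have \<eta>0: "0 < \<eta>" unfolding \<eta>_def using B by simp
  obtain m0 where m0: "\<forall>i\<ge>m0. s i \<le> 1 + \<eta>" using to1 \<eta>0 by blast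
  define m where "m = max m0 2"
  have \<eta>B: "\<eta> * B \<le> 1 / 2" unfolding \<eta>_def using B by (simp add: field_simps)
  have \<eta>h: "\<eta> \<le> 1 / 2" unfolding \<eta>_def using B by (simp add: field_simps)
  have claim: "min B (real k / 4) \<le> vv s (m + k)" for k
  proof (induction k)
    case 0
    then show ?case using vv_nonneg[OF s1] B by (simp add: min_def)
  next
    case (Suc k)
    define j where "j = m + k"
    define a where "a = vv s j"
    define sg where "sg = s (Suc j)"
    have a0: "0 \<le> a" unfolding a_def using vv_nonneg[OF s1] by blast
    have aIH: "min B (real k / 4) \<le> a" using Suc.IH unfolding a_def j_def .
    have sg1: "1 \<le> sg" and sg2: "sg \<le> 1 + \<eta>" unfolding sg_def j_def m_def using s1 m0 by auto
    have j1: "j \<noteq> 0" unfolding j_def m_def by auto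
    have "vv s (Suc j) = (a + 1) / sg" unfolding a_def sg_def using j1 by simp
    then have vj: "vv s (m + Suc k) = (a + 1) / sg" unfolding j_def by simp
    have f1: "(a + 1) / (1 + \<eta>) \<le> (a + 1) / sg"
      using sg1 sg2 a0 by (intro divide_left_mono) auto
    have f2: "min B (real (Suc k) / 4) * (1 + \<eta>) \<le> a + 1"
    proof (cases "B \<le> a")
      case True
      have "min B (real (Suc k) / 4) * (1 + \<eta>) \<le> B * (1 + \<eta>)"
        using \<eta>0 by (intro mult_right_mono) auto
      also have "\<dots> = B + \<eta> * B" by (simp add: algebra_simps)
      finally show ?thesis using \<eta>B True by linarith
    next
      case False
      then have ak: "real k / 4 \<le> a" using aIH by (simp add: min_def split: if_splits)
      have "min B (real (Suc k) / 4) * (1 + \<eta>) \<le> (a + 1/4) * (1 + \<eta>)"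
      proof (rule mult_right_mono)
        have "min B (real (Suc k) / 4) \<le> real (Suc k) / 4" by (rule min.cobounded2)
        also have "\<dots> = real k / 4 + 1/4" by simp
        finally show "min B (real (Suc k) / 4) \<le> a + 1/4" using ak by linarith
      qed (use \<eta>0 in auto)
      also have "\<dots> = a + 1/4 + \<eta> * a + \<eta> / 4" by (simp add: algebra_simps)
      also have "\<eta> * a \<le> \<eta> * B" using False \<eta>0 by (intro mult_left_mono) auto
      finally show ?thesis using \<eta>B \<eta>h by linarith
    qed
    have "min B (real (Suc k) / 4) \<le> (a + 1) / (1 + \<eta>)"
      using f2 \<eta>0 by (simp add: field_simps)
    then show ?case using f1 vj by linarith
  qed
  show ?thesis
  proof (intro exI[of _ "m + nat \<lceil>4 * B\<rceil>"] allI impI)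
    fix j assume j: "m + nat \<lceil>4 * B\<rceil> \<le> j"
    define k where "k = j - m"
    have jk: "j = m + k" unfolding k_def using j by simp
    have "4 * B \<le> real k" unfolding k_def using j by linarith
    then have "min B (real k / 4) = B" by (simp add: min_def)
    then show "B \<le> vv s j" using claim[of k] jk by simp
  qed
qed


lemma speeds_to_one:
  fixes s :: "nat \<Rightarrow> real"
  assumes s1: "\<forall>i\<ge>2. 1 \<le> s i"
    and monotone: "(\<forall>i j. 2 \<le> i \<longrightarrow> i \<le> j \<longrightarrow> s i \<le> s j) \<or>
                   (\<forall>i j. 2 \<le> i \<longrightarrow> i \<le> j \<longrightarrow> s j \<le> s i)"
    and liminf_one: "liminf (\<lambda>n. ereal ((\<Prod>i=2..n. s i) powr (1 / real n))) = 1"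
  shows "\<forall>\<eta>>0. \<exists>m. \<forall>i\<ge>m. s i \<le> 1 + \<eta>"
proof (rule ccontr)
  assume "\<not> ?thesis"
  then obtain \<eta> where \<eta>0: "0 < \<eta>" and inf: "\<forall>m. \<exists>i\<ge>m. 1 + \<eta> < s i"
    by (auto simp: not_le)
  obtain i0 where i02: "2 \<le> i0" and i0: "\<forall>i\<ge>i0. 1 + \<eta> \<le> s i"
  proof (cases "\<forall>i j. 2 \<le> i \<longrightarrow> i \<le> j \<longrightarrow> s i \<le> s j")
    case True
    obtain i1 where "i1 \<ge> 2" "1 + \<eta> < s i1" using inf by blast
    then show ?thesis using True that[of i1] by force
  next
    case False
    then have dec: "\<forall>i j. 2 \<le> i \<longrightarrow> i \<le> j \<longrightarrow> s j \<le> s i" using monotone by blast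
    have "\<forall>i\<ge>2. 1 + \<eta> \<le> s i"
    proof (intro allI impI)
      fix i :: nat assume i: "2 \<le> i"
      obtain i' where "i' \<ge> i" "1 + \<eta> < s i'" using inf by blast
      then show "1 + \<eta> \<le> s i" using dec i by force
    qed
    then show ?thesis using that[of 2] by auto
  qed
  define a where "a = (1 + \<eta>) powr (1 / 2)"
  have a1: "1 < a"
  proof -
    have "(1 + \<eta>) powr 0 < (1 + \<eta>) powr (1 / 2)" using \<eta>0 by (intro powr_less_mono) auto
    then show ?thesis unfolding a_def using \<eta>0 by simp
  qed
  have ev: "\<forall>n\<ge>2 * i0. ereal a \<le> ereal ((\<Prod>i=2..n. s i) powr (1 / real n))"
  proof (intro allI impI)
    fix n assume n: "2 * i0 \<le> n"
    define g where "g = (\<lambda>i::nat. if i0 \<le> i then 1 + \<eta> else 1)"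
    define e where "e = n + 1 - i0"
    have "(\<Prod>i=2..n. g i) \<le> (\<Prod>i=2..n. s i)"
      by (rule prod_mono) (use s1 i0 \<eta>0 in \<open>auto simp: g_def\<close>)
    moreover have "(\<Prod>i=2..n. g i) = (1 + \<eta>) ^ e"
    proof -
      have U: "{2..n} = {2..<i0} \<union> {i0..n}" using i02 n by auto
      have "(\<Prod>i=2..n. g i) = (\<Prod>i\<in>{2..<i0}. g i) * (\<Prod>i\<in>{i0..n}. g i)"
        unfolding U by (rule prod.union_disjoint) auto
      also have "(\<Prod>i\<in>{2..<i0}. g i) = 1" by (rule prod.neutral) (auto simp: g_def)
      also have "(\<Prod>i\<in>{i0..n}. g i) = (\<Prod>i\<in>{i0..n}. 1 + \<eta>)" by (rule prod.cong) (auto simp: g_def)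
      also have "\<dots> = (1 + \<eta>) ^ e" by (simp add: e_def)
      finally show ?thesis by simp
    qed
    ultimately have P: "(1 + \<eta>) ^ e \<le> (\<Prod>i=2..n. s i)" by simp
    have "a = (1 + \<eta>) powr (1 / 2)" by (simp add: a_def)
    also have "\<dots> \<le> (1 + \<eta>) powr (real e / real n)"
    proof (rule powr_mono)
      have "real n \<le> 2 * real e" unfolding e_def using n by auto
      moreover have "0 < real n" using n i02 by auto
      ultimately show "1 / 2 \<le> real e / real n" by (simp add: field_simps)
    qed (use \<eta>0 in auto)
    also have "\<dots> = ((1 + \<eta>) ^ e) powr (1 / real n)"
      using \<eta>0 by (simp add: powr_realpow[symmetric] powr_powr)
    also have "\<dots> \<le> (\<Prod>i=2..n. s i) powr (1 / real n)"
      using P \<eta>0 by (intro powr_mono2) auto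
    finally show "ereal a \<le> ereal ((\<Prod>i=2..n. s i) powr (1 / real n))" by simp
  qed
  have "ereal a \<le> liminf (\<lambda>n. ereal ((\<Prod>i=2..n. s i) powr (1 / real n)))"
    by (rule Liminf_bounded) (use ev in \<open>auto simp: eventually_sequentially\<close>)
  then show False using liminf_one a1 by simp
qed


lemma concat_rep_Suc: "concat (replicate (Suc T) P) = concat (replicate T P) @ P"
  by (induction T) auto

theorem lemma2:
  fixes s :: "nat \<Rightarrow> real"
  assumes speeds_ge1: "\<forall>i\<ge>2. 1 \<le> s i"
    and monotone: "(\<forall>i j. 2 \<le> i \<longrightarrow> i \<le> j \<longrightarrow> s i \<le> s j) \<or>
                   (\<forall>i j. 2 \<le> i \<longrightarrow> i \<le> j \<longrightarrow> s j \<le> s i)"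
    and liminf_one: "liminf (\<lambda>n. ereal ((\<Prod>i=2..n. s i) powr (1 / real n))) = 1"
  shows "\<not> competitive (DC_cost s)"
proof
  assume "competitive (DC_cost s)"
  then obtain \<rho> c where H: "\<forall>\<sigma>. (\<forall>r\<in>set \<sigma>. 0 \<le> r) \<longrightarrow> DC_cost s \<sigma> \<le> \<rho> * OPT \<sigma> + c"
    unfolding competitive_def by blast
  note s1 = speeds_ge1
  define B where "B = 4 * (\<bar>\<rho>\<bar> + \<bar>c\<bar> + 1)"
  have B0: "0 < B" unfolding B_def by simp
  obtain m where m: "\<forall>j\<ge>m. B \<le> vv s j"
    using vv_big[OF s1 speeds_to_one[OF s1 monotone liminf_one] B0] by blast
  define n where "n = 2 * m + 2"
  have n0: "0 < n" unfolding n_def by simp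
  define P where "P = map (\<lambda>k. 1 + real k / real n) [0..<n]"
  have lenP: "length P = n" unfolding P_def by simp
  have Pk: "\<And>k. k < n \<Longrightarrow> P ! k = 1 + real k / real n" unfolding P_def by simp
  have Pb: "\<forall>r\<in>set P. 1 \<le> r \<and> r \<le> 2" unfolding P_def using n0 by auto
  have Ppos: "\<forall>r\<in>set P. 0 < r" using Pb by force
  have sumP: "sum_list P \<le> 2 * real n"
  proof -
    have "sum_list P = (\<Sum>k<n. P ! k)" by (simp add: sum_list_sum_nth lenP atLeast0LessThan)
    also have "\<dots> \<le> (\<Sum>k<n. 2)" using Pb lenP by (intro sum_mono) (auto simp: nth_mem)
    finally show ?thesis by simp
  qed
  define K where "K = \<bar>\<rho>\<bar> * (2 * real n) + \<bar>c\<bar>"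
  have K0: "0 \<le> K" unfolding K_def by simp
  have cb: "DC_cost s \<sigma> \<le> K" if "set \<sigma> \<subseteq> set P" for \<sigma>
  proof -
    have o: "0 \<le> OPT \<sigma> \<and> OPT \<sigma> \<le> sum_list P" using OPT_bound[OF _ that] Ppos by force
    have "\<forall>r\<in>set \<sigma>. 0 \<le> r" using that Ppos by force
    then have "DC_cost s \<sigma> \<le> \<rho> * OPT \<sigma> + c" using H by blast
    also have "\<rho> * OPT \<sigma> \<le> \<bar>\<rho>\<bar> * OPT \<sigma>" using o by (intro mult_right_mono) auto
    also have "\<bar>\<rho>\<bar> * OPT \<sigma> \<le> \<bar>\<rho>\<bar> * (2 * real n)" using o sumP by (intro mult_left_mono) auto
    finally show ?thesis unfolding K_def by linarith
  qed
  define X0 :: "nat \<Rightarrow> real" where "X0 = (\<lambda>_. 0)"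
  define R where "R = (\<lambda>t. concat (replicate t P))"
  have setR: "set (R t) \<subseteq> set P" for t unfolding R_def by auto
  have posR: "\<forall>r\<in>set (R t). 0 < r" for t using setR Ppos by blast
  have lenR: "length (R t) = t * n" for t unfolding R_def by (simp add: lenP length_concat sum_list_replicate)
  note RP0 = run_props[OF s1 posR, of X0 0]
  have X0p: "\<forall>j. 0 \<le> X0 j" "\<forall>j\<ge>Suc 0. X0 j = 0" unfolding X0_def by auto
  define rc where "rc = (\<lambda>t. dc_cost_from s (run s X0 (R t)) P)"
  have y_nn: "\<forall>j. 0 \<le> run s X0 (R t) j" for t using RP0[OF X0p] by blast
  have y_sup: "\<forall>j\<ge>Suc (length (R t)). run s X0 (R t) j = 0" for t using RP0[OF X0p] by simp
  note RPy = run_props[OF s1 Ppos y_nn y_sup]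
  have rc0: "0 \<le> rc t" for t unfolding rc_def using RPy by blast
  have total: "DC_cost s (R T) = (\<Sum>t<T. rc t)" for T
  proof (induction T)
    case 0 then show ?case by (simp add: DC_cost_def R_def)
  next
    case (Suc T)
    have "DC_cost s (R (Suc T)) = DC_cost s (R T) + rc T"
      unfolding DC_cost_def R_def rc_def concat_rep_Suc cost_append X0_def ..
    then show ?case using Suc by simp
  qed
  define T where "T = nat \<lceil>2 * real n * K\<rceil> + 1"
  have T0: "0 < T" unfolding T_def by simp
  have TK: "2 * real n * K < real T" unfolding T_def by linarith
  obtain t where "t < T" and rct: "rc t \<le> K / real T"
  proof (rule ccontr)
    assume "\<not> thesis"
    with that have allgt: "\<forall>t\<in>{..<T}. K / real T < rc t" by force
    have "(\<Sum>t<T. K / real T) < (\<Sum>t<T. rc t)"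
      by (rule sum_strict_mono) (use T0 allgt in auto)
    moreover have "(\<Sum>t<T. K / real T) = K" using T0 by simp
    moreover have "DC_cost s (R T) \<le> K" using cb setR by blast
    ultimately show False using total by simp
  qed
  define \<delta> where "\<delta> = rc t"
  have d0: "0 \<le> \<delta>" unfolding \<delta>_def by (rule rc0)
  have dn: "2 * real n * \<delta> < 1"
  proof -
    have "2 * real n * \<delta> \<le> 2 * real n * (K / real T)" unfolding \<delta>_def using rct by (intro mult_left_mono) auto
    also have "\<dots> < 1" using TK T0 by (simp add: field_simps)
    finally show ?thesis .
  qed
  have dh: "\<delta> \<le> 1 / 2"
  proof -
    have "real n \<ge> 1" using n0 by simp
    then have "2 * \<delta> \<le> 2 * real n * \<delta>" using d0 by (simp add: mult_right_mono)
    then show ?thesis using dn by linarith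
  qed
  define y where "y = run s X0 (R t)"
  define xe where "xe = run s y P"
  have xeR: "xe = run s X0 (R (Suc t))" unfolding xe_def y_def R_def concat_rep_Suc run_append ..
  define N where "N = Suc (length (R (Suc t)))"
  have lenRS: "length (R (Suc t)) = length (R t) + n" unfolding R_def concat_rep_Suc by (simp add: lenP)
  have near: "\<forall>r\<in>set P. \<exists>j. \<bar>xe j - r\<bar> \<le> \<delta>" using RPy[of t] unfolding xe_def y_def \<delta>_def rc_def by blast
  have xe_sup: "\<forall>j\<ge>N. xe j = 0" using RPy[of t] lenRS lenP unfolding xe_def y_def N_def by simp
  have xe_nn: "\<forall>j. 0 \<le> xe j" using RPy[of t] unfolding xe_def y_def by blast
  have Gup: "GG N (vv s) xe \<le> K / 2"
  proof -
    have "GG N (vv s) xe \<le> GG N (vv s) X0 + dc_cost_from s X0 (R (Suc t)) / 2"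
      using RP0[OF X0p, of "Suc t" N] unfolding xeR N_def by simp
    moreover have "GG N (vv s) X0 = 0" unfolding GG_def X0_def by simp
    moreover have "dc_cost_from s X0 (R (Suc t)) \<le> K" using cb[OF setR] unfolding DC_cost_def X0_def by simp
    ultimately show ?thesis by linarith
  qed
  have "\<forall>k<n. \<exists>j. \<bar>xe j - P ! k\<bar> \<le> \<delta>" using near lenP by (auto simp: nth_mem)
  then obtain jf where jf: "\<forall>k<n. \<bar>xe (jf k) - P ! k\<bar> \<le> \<delta>" by metis
  have injf: "inj_on jf {..<n}"
  proof (rule inj_onI)
    fix a b assume a: "a \<in> {..<n}" and b: "b \<in> {..<n}" and e: "jf a = jf b"
    show "a = b"
    proof (rule ccontr)
      assume ab: "a \<noteq> b"
      have ha: "\<bar>xe (jf a) - P ! a\<bar> \<le> \<delta>" using jf a by blast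
      have hb: "\<bar>xe (jf a) - P ! b\<bar> \<le> \<delta>" using jf b e by force
      have "\<bar>P ! a - P ! b\<bar> \<le> 2 * \<delta>" using ha hb by linarith
      moreover have "\<bar>P ! a - P ! b\<bar> = \<bar>real a - real b\<bar> / real n"
        using a b Pk by (simp add: diff_divide_distrib[symmetric])
      moreover have "1 \<le> \<bar>real a - real b\<bar>" using ab by linarith
      moreover have "1 / real n \<le> \<bar>real a - real b\<bar> / real n"
        using n0 \<open>1 \<le> \<bar>real a - real b\<bar>\<close> by (intro divide_right_mono) auto
      ultimately have "1 / real n \<le> 2 * \<delta>" by linarith
      then have "1 \<le> 2 * \<delta> * real n" using n0 by (simp add: field_simps)
      then show False using dn by (simp add: algebra_simps)
    qed
  qed
  define J where "J = jf ` {..<n}"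
  have cardJ: "card J = n" unfolding J_def using injf by (simp add: card_image)
  have Jbig: "\<forall>j\<in>J. 1 / 2 \<le> xe j"
  proof
    fix j assume "j \<in> J"
    then obtain k where k: "k < n" "j = jf k" unfolding J_def by auto
    have "1 \<le> P ! k" using Pb k lenP by (auto simp: nth_mem)
    then show "1 / 2 \<le> xe j" using jf k dh by force
  qed
  have JN: "J \<subseteq> {..<N}"
  proof
    fix j assume "j \<in> J"
    then have "xe j \<noteq> 0" using Jbig by force
    then show "j \<in> {..<N}" using xe_sup by (meson lessThan_iff not_le)
  qed
  have finJ: "finite J" unfolding J_def by simp
  have vnn: "\<forall>j. 0 \<le> vv s j" using vv_nonneg[OF s1] by blast
  have "(\<Sum>j\<in>J - {..<m}. B) \<le> (\<Sum>j\<in>J - {..<m}. vv s j)"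
    using m by (intro sum_mono) auto
  also have "\<dots> \<le> (\<Sum>j\<in>J. vv s j)" using finJ vnn by (intro sum_mono2) auto
  also have "(\<Sum>j\<in>J. vv s j) = 2 * (\<Sum>j\<in>J. vv s j * (1/2))" by (simp add: sum_divide_distrib[symmetric])
  also have "(\<Sum>j\<in>J. vv s j * (1/2)) \<le> (\<Sum>j\<in>J. vv s j * xe j)"
    using Jbig vnn by (intro sum_mono mult_left_mono) auto
  also have "(\<Sum>j\<in>J. vv s j * xe j) \<le> GG N (vv s) xe"
    unfolding GG_def using JN vnn xe_nn by (intro sum_mono2) auto
  finally have L1: "real (card (J - {..<m})) * B \<le> 2 * GG N (vv s) xe" by simp
  have cd: "n - m \<le> card (J - {..<m})"
    using diff_card_le_card_Diff[of "{..<m}" J] cardJ by simp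
  have "real (m + 2) * B \<le> real (card (J - {..<m})) * B"
    using cd B0 unfolding n_def by (intro mult_right_mono) auto
  with L1 Gup have fin: "real (m + 2) * B \<le> K" by linarith
  have "real (m + 2) * B = 4 * real m * \<bar>\<rho>\<bar> + 4 * real m * \<bar>c\<bar> + 4 * real m + 8 * \<bar>\<rho>\<bar> + 8 * \<bar>c\<bar> + 8"
    unfolding B_def by (simp add: algebra_simps)
  moreover have "K = 4 * real m * \<bar>\<rho>\<bar> + 4 * \<bar>\<rho>\<bar> + \<bar>c\<bar>" unfolding K_def n_def by (simp add: algebra_simps)
  moreover have "0 \<le> 4 * real m * \<bar>c\<bar>" by simp
  moreover have "0 \<le> real m" "0 \<le> \<bar>\<rho>\<bar>" "0 \<le> \<bar>c\<bar>" by simp_all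
  ultimately show False using fin by linarith
qed

end
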